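(* For a $G$-space $X$, $\mathrm{cat}^{G,\infty}(X)=0$ if and only if $\mathrm{TC}^{G,\infty}(X)=0$.
   Context: All spaces are well-pointed CW complexes, $G$ a topological group acting cellularly; $x_0\in X$ is the base point. $PX$ is the path space; $\mathcal{P}_k(X)=\{(\gamma_1,\dots,\gamma_k)\in(PX)^k\mid G\gamma_i(1)=G\gamma_{i+1}(0),\ 1\le i\le k-1\}$, $\pi_k(\gamma_1,\dots,\gamma_k)=(\gamma_1(0),\gamma_k(1))\in X\times X$. $\mathrm{secat}$ is the reduced sectional category (least $n$ such that the base is covered by $n+1$ open sets each admitting a homotopy section). $\mathrm{TC}^{G,k}(X)=\mathrm{secat}(\pi_k)$, $\mathrm{TC}^{G,\infty}(X)=\min_k\mathrm{TC}^{G,k}(X)$. $P^k_*(X)=\{(\gamma_1,\dots,\gamma_k)\in\mathcal{P}_k(X)\mid\gamma_1(0)=x_0\}$, $q_k(\gamma_1,\dots,\gamma_k)=\gamma_k(1)$, $\mathrm{cat}^{G,k}(X)=\mathrm{secat}(q_k)$, $\mathrm{cat}^{G,\infty}(X)=\min_k\mathrm{cat}^{G,k}(X)$. *)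

theory Defs
  imports "HOL-Analysis.Analysis" "HOL-Library.Extended_Nat" "HOL-Algebra.Group_Action"
begin

definition top_group_action ::
  "('g, 'm) monoid_scheme \<Rightarrow> 'g topology \<Rightarrow> 'a topology \<Rightarrow> ('g \<Rightarrow> 'a \<Rightarrow> 'a) \<Rightarrow> bool" where
  "top_group_action G TG X phi \<longleftrightarrow>
     group G \<and> topspace TG = carrier G \<and>
     continuous_map (prod_topology TG TG) TG (\<lambda>(g, h). g \<otimes>\<^bsub>G\<^esub> h) \<and>
     continuous_map TG TG (\<lambda>g. inv\<^bsub>G\<^esub> g) \<and>
     group_action G (topspace X) phi \<and>
     continuous_map (prod_topology TG X) X (\<lambda>(g, x). phi g x)"

definition orbit_of :: "('g, 'm) monoid_scheme \<Rightarrow> ('g \<Rightarrow> 'a \<Rightarrow> 'a) \<Rightarrow> 'a \<Rightarrow> 'a set" where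
  "orbit_of G phi x = {phi g x | g. g \<in> carrier G}"

definition path_set :: "'a topology \<Rightarrow> (real \<Rightarrow> 'a) set" where
  "path_set X = {g. pathin X g \<and> (\<forall>t. t \<notin> {0..1} \<longrightarrow> g t = undefined)}"

definition path_space :: "'a topology \<Rightarrow> (real \<Rightarrow> 'a) topology" where
  "path_space X = topology_generated_by
     {{g \<in> path_set X. g ` K \<subseteq> U} | K U.
        compactin (top_of_set {0..1::real}) K \<and> openin X U}"

definition paths_k :: "'a topology \<Rightarrow> nat \<Rightarrow> (nat \<Rightarrow> real \<Rightarrow> 'a) topology" where
  "paths_k X k = product_topology (\<lambda>_. path_space X) {..<k}"

definition chain_cond :: "('g, 'm) monoid_scheme \<Rightarrow> ('g \<Rightarrow> 'a \<Rightarrow> 'a) \<Rightarrow> nat \<Rightarrow> (nat \<Rightarrow> real \<Rightarrow> 'a) \<Rightarrow> bool" where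
  "chain_cond G phi k \<gamma> \<longleftrightarrow>
     (\<forall>i. Suc i < k \<longrightarrow> orbit_of G phi (\<gamma> i 1) = orbit_of G phi (\<gamma> (Suc i) 0))"

definition Pk :: "('g, 'm) monoid_scheme \<Rightarrow> ('g \<Rightarrow> 'a \<Rightarrow> 'a) \<Rightarrow> 'a topology \<Rightarrow> nat \<Rightarrow> (nat \<Rightarrow> real \<Rightarrow> 'a) topology" where
  "Pk G phi X k = subtopology (paths_k X k) {\<gamma>. chain_cond G phi k \<gamma>}"

definition pik :: "nat \<Rightarrow> (nat \<Rightarrow> real \<Rightarrow> 'a) \<Rightarrow> 'a \<times> 'a" where
  "pik k \<gamma> = (\<gamma> 0 0, \<gamma> (k - 1) 1)"

definition Pk_star :: "('g, 'm) monoid_scheme \<Rightarrow> ('g \<Rightarrow> 'a \<Rightarrow> 'a) \<Rightarrow> 'a topology \<Rightarrow> 'a \<Rightarrow> nat \<Rightarrow> (nat \<Rightarrow> real \<Rightarrow> 'a) topology" where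
  "Pk_star G phi X x0 k = subtopology (paths_k X k) {\<gamma>. chain_cond G phi k \<gamma> \<and> \<gamma> 0 0 = x0}"

definition qk :: "nat \<Rightarrow> (nat \<Rightarrow> real \<Rightarrow> 'a) \<Rightarrow> 'a" where
  "qk k \<gamma> = \<gamma> (k - 1) 1"

text \<open>Reduced sectional category of p : E -> B (infinite if no finite cover exists).\<close>
definition secat :: "'e topology \<Rightarrow> 'b topology \<Rightarrow> ('e \<Rightarrow> 'b) \<Rightarrow> enat" where
  "secat E B p = Inf {enat n | n. \<exists>U :: nat \<Rightarrow> 'b set.
      (\<forall>i\<le>n. openin B (U i)) \<and> topspace B \<subseteq> (\<Union>i\<le>n. U i) \<and>
      (\<forall>i\<le>n. \<exists>s. continuous_map (subtopology B (U i)) E s \<and>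
                 homotopic_with (\<lambda>_. True) (subtopology B (U i)) B (p \<circ> s) id)}"

definition TCG_k :: "('g, 'm) monoid_scheme \<Rightarrow> ('g \<Rightarrow> 'a \<Rightarrow> 'a) \<Rightarrow> 'a topology \<Rightarrow> nat \<Rightarrow> enat" where
  "TCG_k G phi X k = secat (Pk G phi X k) (prod_topology X X) (pik k)"

definition TCG_inf :: "('g, 'm) monoid_scheme \<Rightarrow> ('g \<Rightarrow> 'a \<Rightarrow> 'a) \<Rightarrow> 'a topology \<Rightarrow> enat" where
  "TCG_inf G phi X = (INF k\<in>{1..}. TCG_k G phi X k)"

definition catG_k :: "('g, 'm) monoid_scheme \<Rightarrow> ('g \<Rightarrow> 'a \<Rightarrow> 'a) \<Rightarrow> 'a topology \<Rightarrow> 'a \<Rightarrow> nat \<Rightarrow> enat" where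
  "catG_k G phi X x0 k = secat (Pk_star G phi X x0 k) X (qk k)"

definition catG_inf :: "('g, 'm) monoid_scheme \<Rightarrow> ('g \<Rightarrow> 'a \<Rightarrow> 'a) \<Rightarrow> 'a topology \<Rightarrow> 'a \<Rightarrow> enat" where
  "catG_inf G phi X x0 = (INF k\<in>{1..}. catG_k G phi X x0 k)"

end

theory Submission
  imports Defs
begin



lemma cont_gen:
  assumes "\<And>y. y \<in> topspace Y \<Longrightarrow> f y \<in> \<Union>S"
    and "\<And>s. s \<in> S \<Longrightarrow> openin Y {y \<in> topspace Y. f y \<in> s}"
  shows "continuous_map Y (topology_generated_by S) f"
  unfolding continuous_map_def
proof (intro conjI allI impI)
  show "f \<in> topspace Y \<rightarrow> topspace (topology_generated_by S)" using assms(1) by auto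
  fix U assume "openin (topology_generated_by S) U"
  then have "generate_topology_on S U" by (rule openin_topology_generated_by)
  then show "openin Y {y \<in> topspace Y. f y \<in> U}"
  proof induction
    case Empty then show ?case by simp
  next
    case (Int a b)
    have "{y \<in> topspace Y. f y \<in> a \<inter> b} = {y \<in> topspace Y. f y \<in> a} \<inter> {y \<in> topspace Y. f y \<in> b}" by auto
    then show ?case using Int by auto
  next
    case (UN K)
    have "{y \<in> topspace Y. f y \<in> \<Union>K} = (\<Union>k\<in>K. {y \<in> topspace Y. f y \<in> k})" by auto
    then show ?case using UN by auto
  next
    case (Basis s) then show ?case using assms(2) by auto
  qed
qed

lemma topspace_path_space [simp]: "topspace (path_space X) = path_set X"
proof -
  have "path_set X \<in> {{g \<in> path_set X. g ` K \<subseteq> U} | K U.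
        compactin (top_of_set {0..1::real}) K \<and> openin X U}"
    by (rule CollectI, rule exI[of _ "{}"], rule exI[of _ "topspace X"]) auto
  then show ?thesis unfolding path_space_def by auto
qed

lemma path_space_cont:
  assumes "\<And>y. y \<in> topspace Y \<Longrightarrow> f y \<in> path_set X"
    and "\<And>K U. compactin (top_of_set {0..1::real}) K \<Longrightarrow> openin X U \<Longrightarrow>
          openin Y {y \<in> topspace Y. f y ` K \<subseteq> U}"
  shows "continuous_map Y (path_space X) f"
  unfolding path_space_def
proof (rule cont_gen)
  fix y assume "y \<in> topspace Y"
  then show "f y \<in> \<Union> {{g \<in> path_set X. g ` K \<subseteq> U} | K U.
        compactin (top_of_set {0..1::real}) K \<and> openin X U}"
    using topspace_path_space[of X] assms(1) unfolding path_space_def by auto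
next
  fix s assume "s \<in> {{g \<in> path_set X. g ` K \<subseteq> U} | K U.
        compactin (top_of_set {0..1::real}) K \<and> openin X U}"
  then obtain K U where KU: "compactin (top_of_set {0..1::real}) K" "openin X U"
     "s = {g \<in> path_set X. g ` K \<subseteq> U}" by auto
  have "{y \<in> topspace Y. f y \<in> s} = {y \<in> topspace Y. f y ` K \<subseteq> U}"
    using KU(3) assms(1) by auto
  then show "openin Y {y \<in> topspace Y. f y \<in> s}" using assms(2) KU by simp
qed

definition mkpath :: "(real \<times> 'b \<Rightarrow> 'a) \<Rightarrow> 'b \<Rightarrow> real \<Rightarrow> 'a" where
  "mkpath F y = (\<lambda>t. if t \<in> {0..1} then F (t, y) else undefined)"

lemma mkpath_cont:
  assumes F: "continuous_map (prod_topology (top_of_set {0..1::real}) Y) X F"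
  shows "continuous_map Y (path_space X) (mkpath F)"
proof (rule path_space_cont)
  fix y assume y: "y \<in> topspace Y"
  have "continuous_map (top_of_set {0..1}) X (F \<circ> (\<lambda>t. (t, y)))"
  proof (rule continuous_map_compose[OF _ F])
    show "continuous_map (top_of_set {0..1}) (prod_topology (top_of_set {0..1::real}) Y) (\<lambda>t. (t, y))"
      by (rule continuous_map_pairedI) (simp_all add: y)
  qed
  then have "pathin X (mkpath F y)"
    unfolding pathin_def mkpath_def
    by (rule continuous_map_eq) auto
  then show "mkpath F y \<in> path_set X" unfolding path_set_def mkpath_def by auto
next
  fix K U assume K: "compactin (top_of_set {0..1::real}) K" and U: "openin X U"
  have Ksub: "K \<subseteq> {0..1}" using compactin_subset_topspace[OF K] by simp
  define W where "W = {z \<in> topspace (prod_topology (top_of_set {0..1::real}) Y). F z \<in> U}"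
  have W: "openin (prod_topology (top_of_set {0..1::real}) Y) W"
    unfolding W_def using openin_continuous_map_preimage[OF F U] by simp
  show "openin Y {y \<in> topspace Y. mkpath F y ` K \<subseteq> U}"
  proof (subst openin_subopen, intro ballI)
    fix y assume y: "y \<in> {y \<in> topspace Y. mkpath F y ` K \<subseteq> U}"
    then have "K \<times> {y} \<subseteq> W"
    proof (clarsimp)
      fix a assume a: "a \<in> K"
      have "mkpath F y a \<in> U" using y a by blast
      then have "F (a, y) \<in> U" using a Ksub by (auto simp: mkpath_def)
      then show "(a, y) \<in> W" using a Ksub y unfolding W_def by auto
    qed
    moreover have "y \<in> topspace Y" using y by simp
    ultimately obtain A V where AV: "openin (top_of_set {0..1}) A" "openin Y V" "K \<subseteq> A" "y \<in> V" "A \<times> V \<subseteq> W"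
      using tube_lemma_left[OF W K, of y] by metis
    have "V \<subseteq> {y \<in> topspace Y. mkpath F y ` K \<subseteq> U}"
    proof
      fix v assume v: "v \<in> V"
      have "v \<in> topspace Y" using openin_subset[OF AV(2)] v by auto
      moreover have "mkpath F v ` K \<subseteq> U"
      proof (rule image_subsetI)
        fix a assume a: "a \<in> K"
        then have "(a, v) \<in> W" using AV(3,5) v by blast
        then show "mkpath F v a \<in> U" using a Ksub unfolding W_def mkpath_def by auto
      qed
      ultimately show "v \<in> {y \<in> topspace Y. mkpath F y ` K \<subseteq> U}" by simp
    qed
    then show "\<exists>T. openin Y T \<and> y \<in> T \<and> T \<subseteq> {y \<in> topspace Y. mkpath F y ` K \<subseteq> U}"
      using AV(2,4) by auto
  qed
qed

lemma mkpath_0 [simp]: "mkpath F y 0 = F (0, y)" and mkpath_1 [simp]: "mkpath F y 1 = F (1, y)"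
  by (auto simp: mkpath_def)

definition revp :: "(real \<Rightarrow> 'a) \<Rightarrow> real \<Rightarrow> 'a" where
  "revp g = (\<lambda>t. if t \<in> {0..1} then g (1 - t) else undefined)"

lemma revp_0 [simp]: "revp g 0 = g 1" and revp_1 [simp]: "revp g 1 = g 0"
  by (auto simp: revp_def)

lemma revp_cont: "continuous_map (path_space X) (path_space X) revp"
proof (rule path_space_cont)
  fix g assume "g \<in> topspace (path_space X)"
  then have g: "pathin X g" by (simp add: path_set_def)
  have "continuous_map (top_of_set {0..1}) X (g \<circ> (\<lambda>t. 1 - t))"
    using g unfolding pathin_def
    by (intro continuous_map_compose[OF _ g[unfolded pathin_def]])
       (auto simp: continuous_map_in_subtopology intro!: continuous_intros)
  then have "pathin X (revp g)" unfolding pathin_def revp_def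
    by (rule continuous_map_eq) auto
  then show "revp g \<in> path_set X" unfolding path_set_def revp_def by auto
next
  fix K U assume K: "compactin (top_of_set {0..1::real}) K" and U: "openin X U"
  have Ksub: "K \<subseteq> {0..1}" using compactin_subset_topspace[OF K] by simp
  have c: "continuous_map (top_of_set {0..1::real}) (top_of_set {0..1::real}) (\<lambda>t. 1 - t)"
    by (auto simp: continuous_map_in_subtopology intro!: continuous_intros)
  have K': "compactin (top_of_set {0..1::real}) ((\<lambda>t. 1 - t) ` K)"
    by (rule image_compactin[OF K c])
  have "{g \<in> topspace (path_space X). revp g ` K \<subseteq> U} = {g \<in> path_set X. g ` ((\<lambda>t. 1 - t) ` K) \<subseteq> U}"
    using Ksub by (auto simp: revp_def subset_iff)
  also have "openin (path_space X) \<dots>"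
    unfolding path_space_def by (rule topology_generated_by_Basis) (use K' U in blast)
  finally show "openin (path_space X) {g \<in> topspace (path_space X). revp g ` K \<subseteq> U}" .
qed

lemma Inf_enat_0: "Inf A = (0::enat) \<longleftrightarrow> 0 \<in> A"
proof
  assume "Inf A = 0"
  then have "A \<noteq> {}" by (auto simp: Inf_enat_def)
  then have "Inf A \<in> A" unfolding Inf_enat_def by (auto intro: LeastI)
  then show "0 \<in> A" using \<open>Inf A = 0\<close> by simp
qed (metis Inf_lower le_zero_eq)

lemma secat_0:
  "secat E B p = 0 \<longleftrightarrow> (\<exists>s. continuous_map B E s \<and> homotopic_with (\<lambda>_. True) B B (p \<circ> s) id)"
proof -
  have "secat E B p = 0 \<longleftrightarrow> (\<exists>U :: nat \<Rightarrow> 'b set.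
      (\<forall>i\<le>0. openin B (U i)) \<and> topspace B \<subseteq> (\<Union>i\<le>0. U i) \<and>
      (\<forall>i\<le>0. \<exists>s. continuous_map (subtopology B (U i)) E s \<and>
                 homotopic_with (\<lambda>_. True) (subtopology B (U i)) B (p \<circ> s) id))"
    unfolding secat_def Inf_enat_0 by (auto simp: zero_enat_def)
  also have "\<dots> \<longleftrightarrow> (\<exists>s. continuous_map B E s \<and> homotopic_with (\<lambda>_. True) B B (p \<circ> s) id)"
  proof
    assume "\<exists>U :: nat \<Rightarrow> 'b set.
      (\<forall>i\<le>0. openin B (U i)) \<and> topspace B \<subseteq> (\<Union>i\<le>0. U i) \<and>
      (\<forall>i\<le>0. \<exists>s. continuous_map (subtopology B (U i)) E s \<and>
                 homotopic_with (\<lambda>_. True) (subtopology B (U i)) B (p \<circ> s) id)"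
    then obtain U :: "nat \<Rightarrow> 'b set" where "topspace B \<subseteq> U 0"
      "\<exists>s. continuous_map (subtopology B (U 0)) E s \<and>
                 homotopic_with (\<lambda>_. True) (subtopology B (U 0)) B (p \<circ> s) id" by auto
    then show "\<exists>s. continuous_map B E s \<and> homotopic_with (\<lambda>_. True) B B (p \<circ> s) id"
      by (simp add: subtopology_superset)
  next
    assume "\<exists>s. continuous_map B E s \<and> homotopic_with (\<lambda>_. True) B B (p \<circ> s) id"
    then show "\<exists>U :: nat \<Rightarrow> 'b set.
      (\<forall>i\<le>0. openin B (U i)) \<and> topspace B \<subseteq> (\<Union>i\<le>0. U i) \<and>
      (\<forall>i\<le>0. \<exists>s. continuous_map (subtopology B (U i)) E s \<and>
                 homotopic_with (\<lambda>_. True) (subtopology B (U i)) B (p \<circ> s) id)"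
      by (intro exI[of _ "\<lambda>_. topspace B"]) auto
  qed
  finally show ?thesis .
qed

lemma INF_enat_0: "(INF k\<in>{1..}. f k) = (0::enat) \<longleftrightarrow> (\<exists>k\<ge>1. f k = 0)"
  by (auto simp: Inf_enat_0 image_iff)





lemma Pk_star_top: "\<gamma> \<in> topspace (Pk_star G phi X x0 k) \<longleftrightarrow>
   \<gamma> \<in> (\<Pi>\<^sub>E i\<in>{..<k}. path_set X) \<and> chain_cond G phi k \<gamma> \<and> \<gamma> 0 0 = x0"
  by (simp add: Pk_star_def paths_k_def)

lemma Pk_top: "\<gamma> \<in> topspace (Pk G phi X k) \<longleftrightarrow>
   \<gamma> \<in> (\<Pi>\<^sub>E i\<in>{..<k}. path_set X) \<and> chain_cond G phi k \<gamma>"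
  by (simp add: Pk_def paths_k_def)

lemma proj_cont:
  assumes "continuous_map Y (paths_k X k) s" "j < k"
  shows "continuous_map Y (path_space X) (\<lambda>y. s y j)"
proof -
  have a: "continuous_map Y (product_topology (\<lambda>_. path_space X) {..<k}) s" using assms(1) by (simp add: paths_k_def)
  have b: "continuous_map (product_topology (\<lambda>_. path_space X) {..<k}) (path_space X) (\<lambda>x. x j)"
    using continuous_map_product_projection[of j "{..<k}" "\<lambda>_. path_space X"] assms(2) by simp
  show ?thesis using continuous_map_compose[OF a b] by (simp add: o_def)
qed

lemma cat_to_TC:
  assumes k: "k \<ge> 1"
    and s: "continuous_map X (Pk_star G phi X x0 k) s"
    and h: "homotopic_with (\<lambda>_. True) X X (qk k \<circ> s) id"
  shows "\<exists>S. continuous_map (prod_topology X X) (Pk G phi X (2*k)) S \<and>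
     homotopic_with (\<lambda>_. True) (prod_topology X X) (prod_topology X X) (pik (2*k) \<circ> S) id"
proof -
  define S where "S z = (\<lambda>i. if i < k then revp (s (fst z) (k - 1 - i))
       else if i < 2*k then s (snd z) (i - k) else undefined)" for z
  have s': "continuous_map X (paths_k X k) s"
    using s by (simp add: Pk_star_def continuous_map_in_subtopology)
  have sx: "s x \<in> (\<Pi>\<^sub>E i\<in>{..<k}. path_set X)" "chain_cond G phi k (s x)" "s x 0 0 = x0"
    if "x \<in> topspace X" for x
  proof -
    have "s x \<in> topspace (Pk_star G phi X x0 k)"
      using continuous_map_image_subset_topspace[OF s] that by blast
    then show "s x \<in> (\<Pi>\<^sub>E i\<in>{..<k}. path_set X)" "chain_cond G phi k (s x)" "s x 0 0 = x0"
      unfolding Pk_star_top by auto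
  qed
  have contS: "continuous_map (prod_topology X X) (paths_k X (2*k)) S"
    unfolding paths_k_def continuous_map_componentwise
  proof (intro conjI ballI)
    show "S ` topspace (prod_topology X X) \<subseteq> extensional {..<2 * k}"
      by (auto simp: S_def extensional_def)
  next
    fix i assume i: "i \<in> {..<2*k}"
    show "continuous_map (prod_topology X X) (path_space X) (\<lambda>x. S x i)"
    proof (cases "i < k")
      case True
      have "continuous_map (prod_topology X X) (path_space X) (revp \<circ> (\<lambda>x. s x (k - 1 - i)) \<circ> fst)"
        by (intro continuous_map_compose[OF continuous_map_fst] continuous_map_compose[OF _ revp_cont]
            proj_cont[OF s']) (use True in auto)
      then show ?thesis by (rule continuous_map_eq) (use True in \<open>auto simp: S_def\<close>)
    next
      case False
      have "continuous_map (prod_topology X X) (path_space X) ((\<lambda>x. s x (i - k)) \<circ> snd)"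
        by (intro continuous_map_compose[OF continuous_map_snd] proj_cont[OF s']) (use False i in auto)
      then show ?thesis by (rule continuous_map_eq) (use False i in \<open>auto simp: S_def\<close>)
    qed
  qed
  have chS: "chain_cond G phi (2*k) (S z)" if z: "z \<in> topspace (prod_topology X X)" for z
    unfolding chain_cond_def
  proof (intro allI impI)
    fix i assume i: "Suc i < 2*k"
    obtain x y where xy: "z = (x, y)" "x \<in> topspace X" "y \<in> topspace X" using z by auto
    consider "Suc i < k" | "Suc i = k" | "k \<le> i" by linarith
    then show "orbit_of G phi (S z i 1) = orbit_of G phi (S z (Suc i) 0)"
    proof cases
      case 1
      have "orbit_of G phi (s x (k - 1 - Suc i) 1) = orbit_of G phi (s x (Suc (k - 1 - Suc i)) 0)"
        using sx(2)[OF xy(2)] 1 unfolding chain_cond_def by auto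
      moreover have "Suc (k - 1 - Suc i) = k - 1 - i" using 1 by simp
      ultimately show ?thesis using 1 xy by (simp add: S_def)
    next
      case 2
      then show ?thesis using xy sx(3)[OF xy(2)] sx(3)[OF xy(3)] by (simp add: S_def)
    next
      case 3
      have "orbit_of G phi (s y (i - k) 1) = orbit_of G phi (s y (Suc (i - k)) 0)"
        using sx(2)[OF xy(3)] 3 i unfolding chain_cond_def by auto
      moreover have "Suc (i - k) = Suc i - k" using 3 by simp
      ultimately show ?thesis using 3 i xy by (simp add: S_def)
    qed
  qed
  have contS': "continuous_map (prod_topology X X) (Pk G phi X (2*k)) S"
    unfolding Pk_def continuous_map_in_subtopology using contS chS by auto
  have hh: "homotopic_with (\<lambda>_. True) (prod_topology X X) (prod_topology X X)
     (\<lambda>z. ((qk k \<circ> s) (fst z), (qk k \<circ> s) (snd z))) (\<lambda>z. (id (fst z), id (snd z)))"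
    by (rule homotopic_with_prod_topology[OF h h]) auto
  have "homotopic_with (\<lambda>_. True) (prod_topology X X) (prod_topology X X) (pik (2*k) \<circ> S) id"
  proof (rule homotopic_with_eq[OF hh])
    fix z assume "z \<in> topspace (prod_topology X X)"
    have "2 * k - 1 - k = k - 1" "\<not> (2 * k - 1 < k)" "2 * k - 1 < 2 * k" using k by auto
    then show "(pik (2*k) \<circ> S) z = ((qk k \<circ> s) (fst z), (qk k \<circ> s) (snd z))"
      using k by (simp add: S_def pik_def qk_def)
  qed auto
  then show ?thesis using contS' by blast
qed



lemma TC_to_cat:
  assumes k: "k \<ge> 1" and x0: "x0 \<in> topspace X"
    and s: "continuous_map (prod_topology X X) (Pk G phi X k) s"
    and h: "homotopic_with (\<lambda>_. True) (prod_topology X X) (prod_topology X X) (pik k \<circ> s) id"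
  shows "\<exists>s'. continuous_map X (Pk_star G phi X x0 (Suc k)) s' \<and>
     homotopic_with (\<lambda>_. True) X X (qk (Suc k) \<circ> s') id"
proof -
  obtain H where H: "continuous_map (prod_topology (top_of_set {0..1::real}) (prod_topology X X)) (prod_topology X X) H"
    and H0: "\<And>z. H (0, z) = (pik k \<circ> s) z" and H1: "\<And>z. H (1, z) = id z"
    using h unfolding homotopic_with_def by blast
  define F where "F = (\<lambda>(t, y). fst (H (1 - t, (x0, y))))"
  have c: "continuous_map (top_of_set {0..1::real}) (top_of_set {0..1::real}) (\<lambda>t. 1 - t)"
    by (auto simp: continuous_map_in_subtopology intro!: continuous_intros)
  have m: "continuous_map (prod_topology (top_of_set {0..1::real}) X)
       (prod_topology (top_of_set {0..1::real}) (prod_topology X X)) (\<lambda>(t, y). (1 - t, (x0, y)))"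
  proof -
    have "continuous_map (prod_topology (top_of_set {0..1::real}) X)
       (prod_topology (top_of_set {0..1::real}) (prod_topology X X)) (\<lambda>z. ((\<lambda>t. 1 - t) (fst z), (x0, snd z)))"
    proof (rule continuous_map_pairedI)
      show "continuous_map (prod_topology (top_of_set {0..1::real}) X) (top_of_set {0..1}) (\<lambda>z. (\<lambda>t. 1 - t) (fst z))"
        using continuous_map_compose[OF continuous_map_fst c] by (simp add: o_def)
      show "continuous_map (prod_topology (top_of_set {0..1::real}) X) (prod_topology X X) (\<lambda>z. (x0, snd z))"
        by (rule continuous_map_pairedI) (simp_all add: x0 continuous_map_snd)
    qed
    then show ?thesis by (simp add: case_prod_beta')
  qed
  have Fc: "continuous_map (prod_topology (top_of_set {0..1::real}) X) X F"
  proof -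
    have "continuous_map (prod_topology (top_of_set {0..1::real}) X) X (fst \<circ> H \<circ> (\<lambda>(t, y). (1 - t, (x0, y))))"
      by (intro continuous_map_compose[OF m] continuous_map_compose[OF H] continuous_map_fst)
    then show ?thesis by (simp add: F_def o_def case_prod_beta')
  qed
  define \<beta> where "\<beta> = mkpath F"
  have \<beta>c: "continuous_map X (path_space X) \<beta>" unfolding \<beta>_def by (rule mkpath_cont[OF Fc])
  have \<beta>0: "\<beta> y 0 = x0" for y by (simp add: \<beta>_def F_def H1)
  have \<beta>1: "\<beta> y 1 = s (x0, y) 0 0" for y by (simp add: \<beta>_def F_def H0 pik_def)
  define s' where "s' y = (\<lambda>i. if i = 0 then \<beta> y else if i < Suc k then s (x0, y) (i - 1) else undefined)" for y
  have s1: "continuous_map (prod_topology X X) (paths_k X k) s"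
    using s by (simp add: Pk_def continuous_map_in_subtopology)
  have j: "continuous_map X (prod_topology X X) (\<lambda>y. (x0, y))"
    by (rule continuous_map_pairedI) (simp_all add: x0)
  have s0: "continuous_map X (paths_k X k) (\<lambda>y. s (x0, y))"
    using continuous_map_compose[OF j s1] by (simp add: o_def)
  have sy: "chain_cond G phi k (s (x0, y))" if "y \<in> topspace X" for y
  proof -
    have "(x0, y) \<in> topspace (prod_topology X X)" using that x0 by simp
    then have "s (x0, y) \<in> topspace (Pk G phi X k)"
      using continuous_map_image_subset_topspace[OF s] by blast
    then show ?thesis unfolding Pk_top by auto
  qed
  have conts': "continuous_map X (paths_k X (Suc k)) s'"
    unfolding paths_k_def continuous_map_componentwise
  proof (intro conjI ballI)
    show "s' ` topspace X \<subseteq> extensional {..<Suc k}"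
      by (auto simp: s'_def extensional_def)
  next
    fix i assume i: "i \<in> {..<Suc k}"
    show "continuous_map X (path_space X) (\<lambda>x. s' x i)"
    proof (cases "i = 0")
      case True
      then show ?thesis using \<beta>c by (simp add: s'_def)
    next
      case False
      have "continuous_map X (path_space X) (\<lambda>y. s (x0, y) (i - 1))"
        by (rule proj_cont[OF s0]) (use False i in auto)
      then show ?thesis by (rule continuous_map_eq) (use False i in \<open>auto simp: s'_def\<close>)
    qed
  qed
  have chs': "chain_cond G phi (Suc k) (s' y) \<and> s' y 0 0 = x0" if y: "y \<in> topspace X" for y
    unfolding chain_cond_def
  proof (intro conjI allI impI)
    fix i assume i: "Suc i < Suc k"
    show "orbit_of G phi (s' y i 1) = orbit_of G phi (s' y (Suc i) 0)"
    proof (cases "i = 0")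
      case True
      then show ?thesis using i by (simp add: s'_def \<beta>1)
    next
      case False
      have "orbit_of G phi (s (x0, y) (i - 1) 1) = orbit_of G phi (s (x0, y) (Suc (i - 1)) 0)"
        using sy[OF y] i False unfolding chain_cond_def by auto
      then show ?thesis using i False by (simp add: s'_def)
    qed
  next
    show "s' y 0 0 = x0" by (simp add: s'_def \<beta>0)
  qed
  have conts: "continuous_map X (Pk_star G phi X x0 (Suc k)) s'"
    unfolding Pk_star_def continuous_map_in_subtopology using conts' chs' by auto
  have h2: "homotopic_with (\<lambda>_. True) X X (snd \<circ> ((pik k \<circ> s) \<circ> (\<lambda>y. (x0, y)))) (snd \<circ> (id \<circ> (\<lambda>y. (x0, y))))"
    by (intro homotopic_with_compose_continuous_map_left[OF homotopic_with_compose_continuous_map_right[OF h j]]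
        continuous_map_snd) auto
  have "homotopic_with (\<lambda>_. True) X X (qk (Suc k) \<circ> s') id"
  proof (rule homotopic_with_eq[OF h2])
    fix y assume "y \<in> topspace X"
    show "(qk (Suc k) \<circ> s') y = (snd \<circ> ((pik k \<circ> s) \<circ> (\<lambda>y. (x0, y)))) y"
      using k by (simp add: s'_def qk_def pik_def)
  qed auto
  then show ?thesis using conts by blast
qed



theorem mainTheorem7:
  fixes G :: "('g, 'm) monoid_scheme" and TG :: "'g topology"
    and X :: "'a topology" and phi :: "'g \<Rightarrow> 'a \<Rightarrow> 'a" and x0 :: 'a
  assumes "top_group_action G TG X phi"
    and "x0 \<in> topspace X"
  shows "catG_inf G phi X x0 = 0 \<longleftrightarrow> TCG_inf G phi X = 0"
proof
  assume "catG_inf G phi X x0 = 0"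
  then obtain k where k: "k \<ge> 1" "catG_k G phi X x0 k = 0"
    unfolding catG_inf_def INF_enat_0 by blast
  then obtain s where "continuous_map X (Pk_star G phi X x0 k) s"
     "homotopic_with (\<lambda>_. True) X X (qk k \<circ> s) id"
    unfolding catG_k_def secat_0 by blast
  from cat_to_TC[OF k(1) this] have "TCG_k G phi X (2*k) = 0"
    unfolding TCG_k_def secat_0 .
  moreover have "2*k \<ge> 1" using k by simp
  ultimately show "TCG_inf G phi X = 0"
    unfolding TCG_inf_def INF_enat_0 by blast
next
  assume "TCG_inf G phi X = 0"
  then obtain k where k: "k \<ge> 1" "TCG_k G phi X k = 0"
    unfolding TCG_inf_def INF_enat_0 by blast
  then obtain s where "continuous_map (prod_topology X X) (Pk G phi X k) s"
     "homotopic_with (\<lambda>_. True) (prod_topology X X) (prod_topology X X) (pik k \<circ> s) id"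
    unfolding TCG_k_def secat_0 by blast
  from TC_to_cat[OF k(1) assms(2) this] have "catG_k G phi X x0 (Suc k) = 0"
    unfolding catG_k_def secat_0 .
  then show "catG_inf G phi X x0 = 0"
    unfolding catG_inf_def INF_enat_0 by (intro exI[of _ "Suc k"]) simp
qed


end
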